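(* Let $p>1$. A scheduling policy $\eta$ is a $p$-approximation policy if it schedules jobs solely based on the requirements $[q^*_X]$ and the state $[d_X(k) : X\in S]$ of the system, and, for every frame $k$, $$\sum_{X\in S}\tilde q_X(k)\,d_X(k)\ \ge\ \frac{1}{p}\ \max_{[q_X]\text{ feasible}}\ \sum_{X\in S} q_X\, d_X(k).$$
   Context: A system consists of a finite set $S$ of tasks. Time is slotted, $t\in\{0,1,2,\dots\}$. Each task $X\in S$ has a period $\tau_X$ (a positive integer); time is partitioned into consecutive periods of $X$ of $\tau_X$ slots each, the first starting at $t=0$, and in each period $X$ has one job, removed at the end of the period. Let $T=\mathrm{lcm}\{\tau_X : X\in S\}$; time is partitioned into consecutive frames of $T$ slots each, the $k$-th frame ($k=1,2,\dots$) being the $k$-th such block starting from $t=0$. A scheduling policy (possibly randomized) chooses in each slot either to idle or to execute the job of exactly one task. Each task $X$ has rewards $r^1_X\ge r^2_X\ge\dots\ge r^{\tau_X}_X\ge 0$: executing the job of $X$ for the $i$-th time within a period yields reward $r^i_X$ to $X$. Let $s_X(t)$ be the total reward obtained by $X$ between time 0 and $t$; the average reward is $q_X=\liminf_{t\to\infty}s_X(t)/(t/T)$. Each task has a minimum requirement $q^*_X>0$; a policy fulfills the system if $q_X\ge q^*_X$ with probability 1 for all $X\in S$. The system (with requirements $[q^*_X]$) is feasible if some policy fulfills it, and strictly feasible if there is $\epsilon>0$ such that the same system with requirements $[(1+\epsilon)q^*_X]$ is feasible. A vector $[q_X : X\in S]$ is called feasible if the system with the same tasks, periods and rewards and requirements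 $[q_X]$ is feasible. For $p\ge 1$, a policy is a $p$-approximation policy if it fulfills every system with requirements $[q^*_X]$ such that the same system with requirements $[p\,q^*_X]$ is strictly feasible. Let $\tilde q_X(k)$ be the total reward obtained by $X$ during the $k$-th frame. The debt of $X$ is $d_X(0)=0$, $d_X(k)=[d_X(k-1)+q^*_X-\tilde q_X(k)]^+$ for $k>0$, with $[x]^+=\max\{x,0\}$; the state of the system at frame $k$ is $[d_X(k) : X\in S]$. *)

theory Defs
  imports "HOL-Probability.Probability"
begin

text \<open>A schedule assigns to every slot t either None (idle) or Some X (execute the job of X).
  Tasks: set S; periods tau; rewards r X i for the i-th execution (i = 1..tau X) within a period.\<close>

type_synonym 'a schedule = "nat \<Rightarrow> 'a option"

definition frame_len :: "'a set \<Rightarrow> ('a \<Rightarrow> nat) \<Rightarrow> nat" where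
  "frame_len S tau = Lcm (tau ` S)"

definition valid_sched :: "'a set \<Rightarrow> 'a schedule \<Rightarrow> bool" where
  "valid_sched S \<sigma> \<longleftrightarrow> (\<forall>t. \<sigma> t = None \<or> (\<exists>X\<in>S. \<sigma> t = Some X))"

definition exec_count :: "('a \<Rightarrow> nat) \<Rightarrow> 'a schedule \<Rightarrow> 'a \<Rightarrow> nat \<Rightarrow> nat" where
  "exec_count tau \<sigma> X t = card {t'. t' \<le> t \<and> t' div tau X = t div tau X \<and> \<sigma> t' = Some X}"

definition slot_reward :: "('a \<Rightarrow> nat) \<Rightarrow> ('a \<Rightarrow> nat \<Rightarrow> real) \<Rightarrow> 'a schedule \<Rightarrow> 'a \<Rightarrow> nat \<Rightarrow> real" where
  "slot_reward tau r \<sigma> X t = (if \<sigma> t = Some X then r X (exec_count tau \<sigma> X t) else 0)"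

definition cum_reward :: "('a \<Rightarrow> nat) \<Rightarrow> ('a \<Rightarrow> nat \<Rightarrow> real) \<Rightarrow> 'a schedule \<Rightarrow> 'a \<Rightarrow> nat \<Rightarrow> real" where
  "cum_reward tau r \<sigma> X t = (\<Sum>t'<t. slot_reward tau r \<sigma> X t')"

definition avg_reward :: "'a set \<Rightarrow> ('a \<Rightarrow> nat) \<Rightarrow> ('a \<Rightarrow> nat \<Rightarrow> real) \<Rightarrow> 'a schedule \<Rightarrow> 'a \<Rightarrow> ereal" where
  "avg_reward S tau r \<sigma> X =
     liminf (\<lambda>t. ereal (cum_reward tau r \<sigma> X t / (real t / real (frame_len S tau))))"

definition frame_reward :: "'a set \<Rightarrow> ('a \<Rightarrow> nat) \<Rightarrow> ('a \<Rightarrow> nat \<Rightarrow> real) \<Rightarrow> 'a schedule \<Rightarrow> 'a \<Rightarrow> nat \<Rightarrow> real" where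
  "frame_reward S tau r \<sigma> X k =
     (\<Sum>t\<in>{(k - 1) * frame_len S tau ..< k * frame_len S tau}. slot_reward tau r \<sigma> X t)"

primrec debt :: "'a set \<Rightarrow> ('a \<Rightarrow> nat) \<Rightarrow> ('a \<Rightarrow> nat \<Rightarrow> real) \<Rightarrow> ('a \<Rightarrow> real) \<Rightarrow> 'a schedule \<Rightarrow> 'a \<Rightarrow> nat \<Rightarrow> real" where
  "debt S tau r q \<sigma> X 0 = 0"
| "debt S tau r q \<sigma> X (Suc k) = max 0 (debt S tau r q \<sigma> X k + q X - frame_reward S tau r \<sigma> X (Suc k))"

definition sys_state :: "'a set \<Rightarrow> ('a \<Rightarrow> nat) \<Rightarrow> ('a \<Rightarrow> nat \<Rightarrow> real) \<Rightarrow> ('a \<Rightarrow> real) \<Rightarrow> 'a schedule \<Rightarrow> nat \<Rightarrow> 'a \<Rightarrow> real" where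
  "sys_state S tau r q \<sigma> k = (\<lambda>X. if X \<in> S then debt S tau r q \<sigma> X k else 0)"

text \<open>The measurable space of (infinite) schedules; a (possibly randomized) policy is
  identified with the law of the schedule it produces.\<close>
definition sched_space :: "'a schedule measure" where
  "sched_space = Pi\<^sub>M UNIV (\<lambda>_::nat. count_space (UNIV :: 'a option set))"

definition fulfills_law :: "'a set \<Rightarrow> ('a \<Rightarrow> nat) \<Rightarrow> ('a \<Rightarrow> nat \<Rightarrow> real) \<Rightarrow> ('a \<Rightarrow> real) \<Rightarrow> 'a schedule measure \<Rightarrow> bool" where
  "fulfills_law S tau r q M \<longleftrightarrow>
     (AE \<sigma> in M. \<forall>X\<in>S. ereal (q X) \<le> avg_reward S tau r \<sigma> X)"

definition feasible :: "'a set \<Rightarrow> ('a \<Rightarrow> nat) \<Rightarrow> ('a \<Rightarrow> nat \<Rightarrow> real) \<Rightarrow> ('a \<Rightarrow> real) \<Rightarrow> bool" where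
  "feasible S tau r q \<longleftrightarrow>
     (\<exists>M. prob_space M \<and> sets M = sets sched_space \<and>
          (AE \<sigma> in M. valid_sched S \<sigma>) \<and> fulfills_law S tau r q M)"

definition strictly_feasible :: "'a set \<Rightarrow> ('a \<Rightarrow> nat) \<Rightarrow> ('a \<Rightarrow> nat \<Rightarrow> real) \<Rightarrow> ('a \<Rightarrow> real) \<Rightarrow> bool" where
  "strictly_feasible S tau r q \<longleftrightarrow> (\<exists>\<epsilon>>0. feasible S tau r (\<lambda>X. (1 + \<epsilon>) * q X))"

definition feasible_vec :: "'a set \<Rightarrow> ('a \<Rightarrow> nat) \<Rightarrow> ('a \<Rightarrow> nat \<Rightarrow> real) \<Rightarrow> ('a \<Rightarrow> real) \<Rightarrow> bool" where
  "feasible_vec S tau r q \<longleftrightarrow> (\<forall>X\<in>S. q X > 0) \<and> feasible S tau r q"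

text \<open>State-based policy: eta q d is the (random) schedule used within the next frame
  (slot i of the frame, i < T), given requirements q and current state d.\<close>
definition state_policy_wf :: "'a set \<Rightarrow> ('a \<Rightarrow> nat) \<Rightarrow> (('a \<Rightarrow> real) \<Rightarrow> ('a \<Rightarrow> real) \<Rightarrow> 'a schedule pmf) \<Rightarrow> bool" where
  "state_policy_wf S tau \<eta> \<longleftrightarrow>
     (\<forall>q d F. F \<in> set_pmf (\<eta> q d) \<longrightarrow>
        (\<forall>i. frame_len S tau \<le> i \<longrightarrow> F i = None) \<and>
        (\<forall>i. F i = None \<or> (\<exists>X\<in>S. F i = Some X)))"

definition realizable :: "'a set \<Rightarrow> ('a \<Rightarrow> nat) \<Rightarrow> ('a \<Rightarrow> nat \<Rightarrow> real) \<Rightarrow>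
    (('a \<Rightarrow> real) \<Rightarrow> ('a \<Rightarrow> real) \<Rightarrow> 'a schedule pmf) \<Rightarrow> ('a \<Rightarrow> real) \<Rightarrow> 'a schedule \<Rightarrow> bool" where
  "realizable S tau r \<eta> q \<sigma> \<longleftrightarrow>
     (\<forall>k. (\<lambda>i. if i < frame_len S tau then \<sigma> (k * frame_len S tau + i) else None)
            \<in> set_pmf (\<eta> q (sys_state S tau r q \<sigma> k)))"

text \<open>eta fulfills the system with requirements q: every law of the schedule produced by
  eta (i.e. every probability law on schedules supported on eta-realizable paths)
  fulfills q almost surely.\<close>
definition policy_fulfills :: "'a set \<Rightarrow> ('a \<Rightarrow> nat) \<Rightarrow> ('a \<Rightarrow> nat \<Rightarrow> real) \<Rightarrow>
    (('a \<Rightarrow> real) \<Rightarrow> ('a \<Rightarrow> real) \<Rightarrow> 'a schedule pmf) \<Rightarrow> ('a \<Rightarrow> real) \<Rightarrow> bool" where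
  "policy_fulfills S tau r \<eta> q \<longleftrightarrow>
     (\<forall>M. prob_space M \<and> sets M = sets sched_space \<and> (AE \<sigma> in M. realizable S tau r \<eta> q \<sigma>)
          \<longrightarrow> fulfills_law S tau r q M)"

definition p_approximation :: "'a set \<Rightarrow> ('a \<Rightarrow> nat) \<Rightarrow> ('a \<Rightarrow> nat \<Rightarrow> real) \<Rightarrow> real \<Rightarrow>
    (('a \<Rightarrow> real) \<Rightarrow> ('a \<Rightarrow> real) \<Rightarrow> 'a schedule pmf) \<Rightarrow> bool" where
  "p_approximation S tau r p \<eta> \<longleftrightarrow>
     (\<forall>q. (\<forall>X\<in>S. q X > 0) \<longrightarrow> strictly_feasible S tau r (\<lambda>X. p * q X) \<longrightarrow>
          policy_fulfills S tau r \<eta> q)"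

end

theory Submission
  imports Defs
begin

lemma ec_bounds:
  assumes "tau X > 0" "\<sigma> t = Some X"
  shows "1 \<le> exec_count tau \<sigma> X t \<and> exec_count tau \<sigma> X t \<le> tau X"
proof -
  let ?A = "{t'. t' \<le> t \<and> t' div tau X = t div tau X \<and> \<sigma> t' = Some X}"
  let ?m = "t div tau X"
  have sub: "?A \<subseteq> {?m * tau X ..< ?m * tau X + tau X}"
  proof
    fix t' assume "t' \<in> ?A"
    then have e: "t' div tau X = ?m" by auto
    have "?m * tau X \<le> t'" using e by (metis div_times_less_eq_dividend)
    moreover have "t' < ?m * tau X + tau X" using e assms(1)
      by (metis add.commute div_mult_mod_eq mod_less_divisor nat_add_left_cancel_less)
    ultimately show "t' \<in> {?m * tau X ..< ?m * tau X + tau X}" by auto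
  qed
  have fin: "finite ?A" using sub finite_subset by blast
  have "t \<in> ?A" using assms by auto
  then have "card ?A \<ge> 1" using fin by (metis One_nat_def Suc_leI card_gt_0_iff empty_iff)
  moreover have "card ?A \<le> tau X" using card_mono[OF _ sub] by simp
  ultimately show ?thesis unfolding exec_count_def by simp
qed

lemma slot_bounds:
  assumes "tau X > 0"
    and mono: "\<forall>i j. 1 \<le> i \<longrightarrow> i \<le> j \<longrightarrow> j \<le> tau X \<longrightarrow> r X j \<le> r X i"
    and nn: "\<forall>i. 1 \<le> i \<longrightarrow> i \<le> tau X \<longrightarrow> 0 \<le> r X i"
  shows "0 \<le> slot_reward tau r \<sigma> X t \<and> slot_reward tau r \<sigma> X t \<le> r X 1"
proof (cases "\<sigma> t = Some X")
  case True
  from ec_bounds[of tau X \<sigma> t, OF assms(1) True] have b: "1 \<le> exec_count tau \<sigma> X t" "exec_count tau \<sigma> X t \<le> tau X" by auto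
  then show ?thesis using True mono nn unfolding slot_reward_def by auto
next
  case False
  have "0 \<le> r X 1" using nn assms(1) by auto
  then show ?thesis using False unfolding slot_reward_def by auto
qed

lemma cum_frames:
  "cum_reward tau r \<sigma> X (k * frame_len S tau) = (\<Sum>j\<in>{1..k}. frame_reward S tau r \<sigma> X j)"
proof (induction k)
  case 0
  then show ?case by (simp add: cum_reward_def)
next
  case (Suc k)
  let ?T = "frame_len S tau"
  have "cum_reward tau r \<sigma> X (Suc k * ?T) = cum_reward tau r \<sigma> X (k * ?T) + frame_reward S tau r \<sigma> X (Suc k)"
    unfolding cum_reward_def frame_reward_def lessThan_atLeast0
    by (simp add: sum.atLeastLessThan_concat add.commute)
  then show ?case using Suc by (simp add: add.commute)
qed

lemma debt_nonneg: "0 \<le> debt S tau r q \<sigma> X k"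
  by (cases k) auto

lemma debt_lower: "debt S tau r q \<sigma> X k \<ge> real k * q X - (\<Sum>j\<in>{1..k}. frame_reward S tau r \<sigma> X j)"
proof (induction k)
  case 0 then show ?case by simp
next
  case (Suc k)
  then show ?case by (simp add: algebra_simps)
qed

lemma drift_bound:
  fixes d g :: "'a \<Rightarrow> nat \<Rightarrow> real" and q G :: "'a \<Rightarrow> real" and \<epsilon> :: real
  assumes fin: "finite S"
    and d0: "\<And>X. d X 0 = 0"
    and dS: "\<And>X k. d X (Suc k) = max 0 (d X k + q X - g X k)"
    and gb: "\<And>X k. X \<in> S \<Longrightarrow> 0 \<le> g X k \<and> g X k \<le> G X"
    and qp: "\<And>X. X \<in> S \<Longrightarrow> q X > 0"
    and ep: "\<epsilon> > 0"
    and ineq: "\<And>k. (\<Sum>X\<in>S. g X k * d X k) \<ge> (1 + \<epsilon>) * (\<Sum>X\<in>S. q X * d X k)"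
  shows "\<exists>D. \<forall>k. \<forall>X\<in>S. d X k \<le> D"
proof -
  have dnn: "0 \<le> d X k" for X k by (cases k) (auto simp: d0 dS)
  define B where "B = (\<Sum>X\<in>S. (q X + G X)^2)"
  define K where "K = B / (2 * \<epsilon>)"
  define C0 where "C0 = (\<Sum>X\<in>S. (K / q X)^2)"
  define C where "C = C0 + B"
  define L where "L k = (\<Sum>X\<in>S. (d X k)^2)" for k
  have B0: "0 \<le> B" unfolding B_def by (simp add: sum_nonneg)
  have C00: "0 \<le> C0" unfolding C0_def by (simp add: sum_nonneg)
  have step: "L (Suc k) \<le> L k - 2 * \<epsilon> * (\<Sum>X\<in>S. q X * d X k) + B" for k
  proof -
    have each: "(d X (Suc k))^2 \<le> (d X k)^2 + 2 * (d X k * q X - g X k * d X k) + (q X + G X)^2"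
      if X: "X \<in> S" for X
    proof -
      have "(d X (Suc k))^2 \<le> (d X k + q X - g X k)^2"
        unfolding dS by (cases "0 \<le> d X k + q X - g X k") (auto simp: max_def)
      also have "\<dots> = (d X k)^2 + 2 * (d X k * q X - g X k * d X k) + (q X - g X k)^2"
        by (simp add: power2_eq_square algebra_simps)
      also have "(q X - g X k)^2 \<le> (q X + G X)^2"
      proof -
        have g: "0 \<le> g X k" "g X k \<le> G X" using gb[OF X, of k] by auto
        have "\<bar>q X - g X k\<bar> \<le> \<bar>q X + G X\<bar>" using g qp[OF X] by auto
        then show ?thesis using abs_le_square_iff by blast
      qed
      finally show ?thesis by simp
    qed
    have "L (Suc k) \<le> (\<Sum>X\<in>S. (d X k)^2 + 2 * (d X k * q X - g X k * d X k) + (q X + G X)^2)"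
      unfolding L_def by (rule sum_mono) (use each in auto)
    also have "\<dots> = L k + 2 * ((\<Sum>X\<in>S. q X * d X k) - (\<Sum>X\<in>S. g X k * d X k)) + B"
      unfolding L_def B_def by (simp add: sum.distrib sum_subtractf sum_distrib_left algebra_simps)
    also have "\<dots> \<le> L k - 2 * \<epsilon> * (\<Sum>X\<in>S. q X * d X k) + B"
      using ineq[of k] by (simp add: algebra_simps)
    finally show ?thesis .
  qed
  have Lb: "L k \<le> C" for k
  proof (induction k)
    case 0 then show ?case using B0 C00 by (simp add: L_def d0 C_def)
  next
    case (Suc k)
    have snn: "0 \<le> (\<Sum>X\<in>S. q X * d X k)"
      by (rule sum_nonneg) (simp add: dnn qp less_imp_le)
    show ?case
    proof (cases "(\<Sum>X\<in>S. q X * d X k) \<ge> K")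
      case True
      then have "2 * \<epsilon> * (\<Sum>X\<in>S. q X * d X k) \<ge> B"
        using ep unfolding K_def by (simp add: field_simps)
      then show ?thesis using step[of k] Suc by linarith
    next
      case False
      have "L k \<le> C0" unfolding L_def C0_def
      proof (rule sum_mono)
        fix X assume X: "X \<in> S"
        have "q X * d X k \<le> (\<Sum>X\<in>S. q X * d X k)"
          by (rule member_le_sum) (use X fin in \<open>auto simp: dnn qp less_imp_le\<close>)
        then have "q X * d X k \<le> K" using False by linarith
        then have "d X k \<le> K / q X" using qp[OF X] by (simp add: field_simps)
        then show "(d X k)^2 \<le> (K / q X)^2" using dnn by (simp add: power_mono)
      qed
      moreover have "0 \<le> 2 * \<epsilon> * (\<Sum>X\<in>S. q X * d X k)" using ep snn by simp
      ultimately show ?thesis using step[of k] unfolding C_def by linarith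
    qed
  qed
  have "\<forall>k. \<forall>X\<in>S. d X k \<le> 1 + C"
  proof (intro allI ballI)
    fix k X assume X: "X \<in> S"
    have "(d X k)^2 \<le> L k" unfolding L_def
      by (rule member_le_sum) (use X fin in auto)
    then have sq: "(d X k)^2 \<le> C" using Lb[of k] by linarith
    show "d X k \<le> 1 + C"
    proof (cases "d X k \<le> 1")
      case True then show ?thesis using C00 B0 C_def by linarith
    next
      case False
      then have "d X k \<le> (d X k)^2" by (simp add: power2_eq_square)
      then show ?thesis using sq by linarith
    qed
  qed
  then show ?thesis by blast
qed

lemma liminf_lower:
  fixes cum :: "nat \<Rightarrow> real" and q D :: real and T :: nat
  assumes T: "T > 0" and q: "q > 0"
    and mono: "\<And>t k. k * T \<le> t \<Longrightarrow> cum (k * T) \<le> cum t"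
    and low: "\<And>k. real k * q - D \<le> cum (k * T)"
  shows "ereal q \<le> liminf (\<lambda>t. ereal (cum t / (real t / real T)))"
proof -
  define c where "c = q * T + D * T"
  define h where "h t = q - c / real t" for t :: nat
  have lim: "(\<lambda>t. ereal (h t)) \<longlonglongrightarrow> ereal q"
  proof -
    have "(\<lambda>t. c / real t) \<longlonglongrightarrow> 0" by (rule tendsto_divide_0[OF tendsto_const]) (rule filterlim_at_top_imp_at_infinity[OF filterlim_real_sequentially])
    then have "h \<longlonglongrightarrow> q - 0" unfolding h_def by (intro tendsto_diff tendsto_const)
    then show ?thesis by (simp add: tendsto_ereal)
  qed
  have ev: "eventually (\<lambda>t. ereal (h t) \<le> ereal (cum t / (real t / real T))) sequentially"
  proof (rule eventually_sequentiallyI[of 1])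
    fix t :: nat assume t1: "1 \<le> t"
    define k where "k = t div T"
    have kT: "k * T \<le> t" unfolding k_def by (simp add: div_times_less_eq_dividend)
    have kT2: "t < k * T + T" unfolding k_def using T
      by (metis add.commute div_mult_mod_eq mod_less_divisor nat_add_left_cancel_less)
    then have "real t < real k * real T + real T" by (metis of_nat_add of_nat_less_iff of_nat_mult)
    then have a: "q * (real t - real T) \<le> q * (real k * real T)" using q by simp
    have b: "real k * q - D \<le> cum t" using low[of k] mono[OF kT] by linarith
    have tp: "real t > 0" using t1 by simp
    have Tp: "real T > 0" using T by simp
    have "cum t / (real t / real T) = cum t * real T / real t" by simp
    have "h t * real t = q * real t - c" unfolding h_def using tp by (simp add: field_simps)
    also have "\<dots> = q * (real t - real T) - D * real T" unfolding c_def by (simp add: algebra_simps)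
    also have "\<dots> \<le> (real k * q - D) * real T" using a by (simp add: algebra_simps)
    also have "\<dots> \<le> cum t * real T" using b Tp by (simp add: mult_right_mono)
    finally have "h t * real t \<le> cum t * real T" .
    then have "h t \<le> cum t * real T / real t" using tp by (simp add: field_simps)
    then show "ereal (h t) \<le> ereal (cum t / (real t / real T))" by simp
  qed
  have "ereal q = liminf (\<lambda>t. ereal (h t))"
    using lim_imp_Liminf[OF trivial_limit_sequentially lim] by simp
  also have "\<dots> \<le> liminf (\<lambda>t. ereal (cum t / (real t / real T)))"
    by (rule Liminf_mono[OF ev])
  finally show ?thesis .
qed

lemma frame_len_pos:
  assumes "finite S" "\<forall>X\<in>S. tau X > 0"
  shows "frame_len S tau > 0"
proof -
  have "0 \<notin> tau ` S" using assms(2) by auto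
  then have "Lcm (tau ` S) \<noteq> 0" using Lcm_0_iff_nat[of "tau ` S"] assms(1) by auto
  then show ?thesis unfolding frame_len_def by simp
qed

lemma cum_upper:
  assumes "tau X > 0"
    and "\<forall>i j. 1 \<le> i \<longrightarrow> i \<le> j \<longrightarrow> j \<le> tau X \<longrightarrow> r X j \<le> r X i"
    and "\<forall>i. 1 \<le> i \<longrightarrow> i \<le> tau X \<longrightarrow> 0 \<le> r X i"
  shows "cum_reward tau r \<sigma> X t \<le> real t * r X 1"
proof -
  have "cum_reward tau r \<sigma> X t \<le> (\<Sum>t'<t. r X 1)" unfolding cum_reward_def
    by (rule sum_mono) (use slot_bounds[where tau=tau and X=X and r=r, OF assms] in auto)
  then show ?thesis by simp
qed

lemma avg_upper:
  assumes T: "frame_len S tau > 0" and "tau X > 0"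
    and "\<forall>i j. 1 \<le> i \<longrightarrow> i \<le> j \<longrightarrow> j \<le> tau X \<longrightarrow> r X j \<le> r X i"
    and nn: "\<forall>i. 1 \<le> i \<longrightarrow> i \<le> tau X \<longrightarrow> 0 \<le> r X i"
  shows "avg_reward S tau r \<sigma> X \<le> ereal (real (frame_len S tau) * r X 1)"
proof -
  let ?T = "frame_len S tau"
  have r1: "0 \<le> r X 1" using nn assms(2) by auto
  have "\<forall>t. ereal (cum_reward tau r \<sigma> X t / (real t / real ?T)) \<le> ereal (real ?T * r X 1)"
  proof
    fix t :: nat
    show "ereal (cum_reward tau r \<sigma> X t / (real t / real ?T)) \<le> ereal (real ?T * r X 1)"
    proof (cases "t = 0")
      case True then show ?thesis using r1 by simp
    next
      case False
      have c: "cum_reward tau r \<sigma> X t \<le> real t * r X 1" by (rule cum_upper[where tau=tau and X=X and r=r, OF assms(2-4)])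
      have "cum_reward tau r \<sigma> X t / (real t / real ?T) = cum_reward tau r \<sigma> X t * real ?T / real t" by simp
      also have "\<dots> \<le> real t * r X 1 * real ?T / real t"
        by (intro divide_right_mono mult_right_mono c) auto
      also have "\<dots> = real ?T * r X 1" using False by simp
      finally show ?thesis by simp
    qed
  qed
  then have "avg_reward S tau r \<sigma> X \<le> liminf (\<lambda>t. ereal (real ?T * r X 1))"
    unfolding avg_reward_def by (intro Liminf_mono) auto
  also have "\<dots> = ereal (real ?T * r X 1)" by (simp add: Liminf_const)
  finally show ?thesis .
qed

lemma feasible_upper:
  assumes T: "frame_len S tau > 0"
    and tp: "\<forall>X\<in>S. tau X > 0"
    and mo: "\<forall>X\<in>S. \<forall>i j. 1 \<le> i \<longrightarrow> i \<le> j \<longrightarrow> j \<le> tau X \<longrightarrow> r X j \<le> r X i"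
    and nn: "\<forall>X\<in>S. \<forall>i. 1 \<le> i \<longrightarrow> i \<le> tau X \<longrightarrow> 0 \<le> r X i"
    and fv: "feasible S tau r v" and X: "X \<in> S"
  shows "v X \<le> real (frame_len S tau) * r X 1"
proof -
  obtain M where M: "prob_space M" and ae: "AE \<sigma> in M. \<forall>X\<in>S. ereal (v X) \<le> avg_reward S tau r \<sigma> X"
    using fv unfolding feasible_def fulfills_law_def by blast
  have "\<exists>\<sigma>. \<forall>X\<in>S. ereal (v X) \<le> avg_reward S tau r \<sigma> X"
  proof (rule ccontr)
    assume "\<not> ?thesis"
    then have "AE \<sigma> in M. False" using ae by (auto elim: AE_mp)
    then show False using prob_space.AE_False[OF M] by simp
  qed
  then obtain \<sigma> where s: "\<forall>X\<in>S. ereal (v X) \<le> avg_reward S tau r \<sigma> X" by blast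
  have "ereal (v X) \<le> ereal (real (frame_len S tau) * r X 1)"
    using s X avg_upper[where S=S and tau=tau and X=X and r=r and \<sigma>=\<sigma>, OF T] tp mo nn by (meson order_trans)
  then show ?thesis by simp
qed

theorem theorem6:
  fixes S :: "'a set" and tau :: "'a \<Rightarrow> nat" and r :: "'a \<Rightarrow> nat \<Rightarrow> real" and p :: real
    and \<eta> :: "('a \<Rightarrow> real) \<Rightarrow> ('a \<Rightarrow> real) \<Rightarrow> 'a schedule pmf"
  assumes "finite S"
    and "\<forall>X\<in>S. tau X > 0"
    and "\<forall>X\<in>S. \<forall>i j. 1 \<le> i \<longrightarrow> i \<le> j \<longrightarrow> j \<le> tau X \<longrightarrow> r X j \<le> r X i"
    and "\<forall>X\<in>S. \<forall>i. 1 \<le> i \<longrightarrow> i \<le> tau X \<longrightarrow> 0 \<le> r X i"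
    and "p > 1"
    and "state_policy_wf S tau \<eta>"
    and "\<forall>q. (\<forall>X\<in>S. q X > 0) \<longrightarrow> (\<forall>\<sigma>. realizable S tau r \<eta> q \<sigma> \<longrightarrow> (\<forall>k.
           (\<Sum>X\<in>S. frame_reward S tau r \<sigma> X (Suc k) * debt S tau r q \<sigma> X k)
             \<ge> (1 / p) * Sup {\<Sum>X\<in>S. v X * debt S tau r q \<sigma> X k | v. feasible_vec S tau r v}))"
  shows "p_approximation S tau r p \<eta>"
proof -
  note fin = assms(1) and tp = assms(2) and mo = assms(3) and nn = assms(4) and hyp = assms(7)
  define T where "T = frame_len S tau"
  have T: "T > 0" unfolding T_def by (rule frame_len_pos[OF fin tp])
  have pp: "p > 0" using assms(5) by simp
  show ?thesis unfolding p_approximation_def policy_fulfills_def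
  proof (intro allI impI, elim conjE)
    fix q :: "'a \<Rightarrow> real" and M
    assume qp: "\<forall>X\<in>S. q X > 0" and sf: "strictly_feasible S tau r (\<lambda>X. p * q X)"
      and ae: "AE \<sigma> in M. realizable S tau r \<eta> q \<sigma>"
    obtain \<epsilon> where ep: "\<epsilon> > 0" and fe: "feasible S tau r (\<lambda>X. (1 + \<epsilon>) * (p * q X))"
      using sf unfolding strictly_feasible_def by blast
    define v where "v = (\<lambda>X. (1 + \<epsilon>) * (p * q X))"
    have fv: "feasible_vec S tau r v" unfolding feasible_vec_def v_def
      using fe qp ep pp by auto
    have main: "\<forall>X\<in>S. ereal (q X) \<le> avg_reward S tau r \<sigma> X" if rz: "realizable S tau r \<eta> q \<sigma>" for \<sigma>
    proof -
      define d where "d X k = debt S tau r q \<sigma> X k" for X k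
      define g where "g X k = frame_reward S tau r \<sigma> X (Suc k)" for X k
      have dnn: "0 \<le> d X k" for X k unfolding d_def by (rule debt_nonneg)
      have gb: "0 \<le> g X k \<and> g X k \<le> real T * r X 1" if X: "X \<in> S" for X k
      proof -
        have sb: "\<And>t. 0 \<le> slot_reward tau r \<sigma> X t \<and> slot_reward tau r \<sigma> X t \<le> r X 1"
          using slot_bounds[of tau X r] tp mo nn X by blast
        have "g X k \<le> (\<Sum>t\<in>{k * T ..< Suc k * T}. r X 1)"
          unfolding g_def frame_reward_def T_def[symmetric] diff_Suc_1 by (rule sum_mono) (use sb in auto)
        also have "\<dots> = real T * r X 1" by simp
        finally show ?thesis unfolding g_def frame_reward_def
          using sb by (auto intro: sum_nonneg)
      qed
      have ineq: "(\<Sum>X\<in>S. g X k * d X k) \<ge> (1 + \<epsilon>) * (\<Sum>X\<in>S. q X * d X k)" for k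
      proof -
        let ?A = "{\<Sum>X\<in>S. v X * debt S tau r q \<sigma> X k | v. feasible_vec S tau r v}"
        have bdd: "bdd_above ?A"
        proof (rule bdd_aboveI)
          fix x assume "x \<in> ?A"
          then obtain w where x: "x = (\<Sum>X\<in>S. w X * debt S tau r q \<sigma> X k)" and w: "feasible_vec S tau r w"
            by blast
          show "x \<le> (\<Sum>X\<in>S. real T * r X 1 * debt S tau r q \<sigma> X k)" unfolding x
          proof (rule sum_mono)
            fix X assume X: "X \<in> S"
            have "w X \<le> real T * r X 1" unfolding T_def
              using feasible_upper[OF frame_len_pos[OF fin tp] tp mo nn _ X] w
              unfolding feasible_vec_def by blast
            then show "w X * debt S tau r q \<sigma> X k \<le> real T * r X 1 * debt S tau r q \<sigma> X k"
              by (rule mult_right_mono) (rule debt_nonneg)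
          qed
        qed
        have "(\<Sum>X\<in>S. v X * debt S tau r q \<sigma> X k) \<in> ?A" using fv by blast
        then have su: "(\<Sum>X\<in>S. v X * debt S tau r q \<sigma> X k) \<le> Sup ?A" by (rule cSup_upper[OF _ bdd])
        have "(1 + \<epsilon>) * (\<Sum>X\<in>S. q X * d X k) = (1 / p) * (\<Sum>X\<in>S. v X * debt S tau r q \<sigma> X k)"
          unfolding v_def d_def using pp by (simp add: sum_distrib_left algebra_simps)
        also have "\<dots> \<le> (1 / p) * Sup ?A" using su pp by (simp add: divide_right_mono)
        also have "\<dots> \<le> (\<Sum>X\<in>S. g X k * d X k)"
          using hyp qp rz unfolding g_def d_def by blast
        finally show ?thesis .
      qed
      obtain D where D: "\<forall>k. \<forall>X\<in>S. d X k \<le> D"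
        using drift_bound[of S d q g "\<lambda>X. real T * r X 1" \<epsilon>] fin ep gb ineq qp
        unfolding d_def g_def by auto
      show ?thesis
      proof
        fix X assume X: "X \<in> S"
        have sb: "\<And>t. 0 \<le> slot_reward tau r \<sigma> X t"
          using slot_bounds[of tau X r] tp mo nn X by blast
        have mono: "cum_reward tau r \<sigma> X (k * T) \<le> cum_reward tau r \<sigma> X t" if "k * T \<le> t" for k t
          unfolding cum_reward_def by (rule sum_mono2) (use that sb in auto)
        have low: "real k * q X - D \<le> cum_reward tau r \<sigma> X (k * T)" for k
          using debt_lower[of k q X S tau r \<sigma>] bspec[OF spec[OF D, of k] X] cum_frames[of tau r \<sigma> X k S] unfolding d_def T_def
          by linarith
        show "ereal (q X) \<le> avg_reward S tau r \<sigma> X"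
          unfolding avg_reward_def T_def[symmetric]
          by (rule liminf_lower[OF T _ mono low]) (use qp X in auto)
      qed
    qed
    show "fulfills_law S tau r q M" unfolding fulfills_law_def
      using ae by (rule eventually_mono) (use main in auto)
  qed
qed

end
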